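(* Let $\mathcal{X}\subset\mathbb{R}^n$ be closed convex, let $\mathcal{S}$ be a set, and for each $s$ let $f(\cdot;s):\mathbb{R}^n\to\mathbb{R}$ be convex and subdifferentiable on $\mathcal{X}$. For each $x\in\mathcal{X}$ and $s\in\mathcal{S}$ let $f_x(\cdot;s)$ satisfy (C.i) $y\mapsto f_x(y;s)$ is convex and subdifferentiable on $\mathcal{X}$, and (C.ii) $f_x(x;s)=f(x;s)$ and $f_x(y;s)\le f(y;s)$ for all $y$. Given $x_k\in\mathcal{X}$, $S_k\in\mathcal{S}$, $\alpha_k>0$, let $x_{k+1}=\arg\min_{x\in\mathcal{X}}\{f_{x_k}(x;S_k)+\frac{1}{2\alpha_k}\|x-x_k\|_2^2\}$. Then $\|x_k-x_{k+1}\|_2\le\alpha_k\|f'(x_k;S_k)\|_2$ for some $f'(x_k;S_k)\in\partial f(x_k;S_k)$. *)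

theory Defs
  imports "HOL-Analysis.Analysis"
begin

definition is_subgradient :: "('a::real_inner \<Rightarrow> real) \<Rightarrow> 'a \<Rightarrow> 'a \<Rightarrow> bool" where
  "is_subgradient h x g \<longleftrightarrow> (\<forall>y. h y \<ge> h x + inner g (y - x))"

definition subdifferentiable_on :: "('a::real_inner \<Rightarrow> real) \<Rightarrow> 'a set \<Rightarrow> bool" where
  "subdifferentiable_on h X \<longleftrightarrow> (\<forall>x\<in>X. \<exists>g. is_subgradient h x g)"

end

theory Submission
  imports Defs
begin

theorem lemma12:
  fixes X :: "(real ^ 'n) set"
    and S :: "'s set"
    and f :: "real ^ 'n \<Rightarrow> 's \<Rightarrow> real"
    and fm :: "real ^ 'n \<Rightarrow> 's \<Rightarrow> real ^ 'n \<Rightarrow> real"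
    and xk xk1 :: "real ^ 'n"
    and Sk :: 's
    and \<alpha> :: real
  assumes "closed X" and "convex X"
    and "\<And>s. s \<in> S \<Longrightarrow> convex_on UNIV (\<lambda>y. f y s)"
    and "\<And>s. s \<in> S \<Longrightarrow> subdifferentiable_on (\<lambda>y. f y s) X"
    and "\<And>x s. x \<in> X \<Longrightarrow> s \<in> S \<Longrightarrow> convex_on X (fm x s)"
    and "\<And>x s. x \<in> X \<Longrightarrow> s \<in> S \<Longrightarrow> subdifferentiable_on (fm x s) X"
    and "\<And>x s. x \<in> X \<Longrightarrow> s \<in> S \<Longrightarrow> fm x s x = f x s"
    and "\<And>x s y. x \<in> X \<Longrightarrow> s \<in> S \<Longrightarrow> fm x s y \<le> f y s"
    and "xk \<in> X" and "Sk \<in> S" and "\<alpha> > 0"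
    and "xk1 \<in> X"
    and "\<And>z. z \<in> X \<Longrightarrow>
           fm xk Sk xk1 + (1 / (2 * \<alpha>)) * (norm (xk1 - xk))\<^sup>2
             \<le> fm xk Sk z + (1 / (2 * \<alpha>)) * (norm (z - xk))\<^sup>2"
  shows "\<exists>g. is_subgradient (\<lambda>y. f y Sk) xk g \<and> norm (xk - xk1) \<le> \<alpha> * norm g"
proof -
  define m where "m = fm xk Sk"
  define F where "F = (\<lambda>y. f y Sk)"
  define c where "c = 1 / (2 * \<alpha>)"
  define d where "d = xk - xk1"
  define D where "D = (norm d)\<^sup>2"
  have c0: "c > 0" using assms(11) by (simp add: c_def)
  have mx: "m xk = F xk" using assms(7)[OF assms(9,10)] by (simp add: m_def F_def)
  obtain h where h: "is_subgradient m xk h"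
    using assms(6)[OF assms(9,10)] assms(9) unfolding subdifferentiable_on_def m_def by blast
  have hF: "is_subgradient F xk h"
    using h assms(8)[OF assms(9,10)] mx unfolding is_subgradient_def m_def F_def
    by (metis order_trans)
  have hlow: "m xk1 \<ge> F xk - inner h d"
    using h mx unfolding is_subgradient_def d_def
    by (metis diff_conv_add_uminus inner_minus_right minus_diff_eq)
  have mconv: "convex_on X m" using assms(5)[OF assms(9,10)] by (simp add: m_def)
  have key: "inner h d \<ge> c * D * (2 - t)" if t: "0 < t" "t \<le> 1" for t
  proof -
    define z where "z = (1 - t) *\<^sub>R xk1 + t *\<^sub>R xk"
    have zX: "z \<in> X" using assms(2,9,12) t unfolding z_def
      by (simp add: convexD)
    have "z - xk = (1 - t) *\<^sub>R (xk1 - xk)" unfolding z_def by (simp add: algebra_simps)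
    hence nz: "(norm (z - xk))\<^sup>2 = (1 - t)\<^sup>2 * D"
      unfolding D_def d_def by (simp add: power_mult_distrib norm_minus_commute)
    have nd: "(norm (xk1 - xk))\<^sup>2 = D" unfolding D_def d_def by (simp add: norm_minus_commute)
    have "m xk1 + c * D \<le> m z + c * ((1 - t)\<^sup>2 * D)"
      using assms(13)[OF zX] nz nd by (simp add: m_def c_def)
    moreover have "m z \<le> (1 - t) * m xk1 + t * m xk"
      using convex_onD[OF mconv, of t xk1 xk] t assms(9,12) by (simp add: z_def)
    ultimately have "m xk1 + c * D \<le> (1 - t) * m xk1 + t * m xk + c * ((1 - t)\<^sup>2 * D)"
      by linarith
    hence "m xk1 + c * D \<le> (1 - t) * m xk1 + t * F xk + c * ((1 - t)\<^sup>2 * D)"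
      by (simp only: mx)
    hence "t * m xk1 \<le> t * F xk - t * (c * D * (2 - t))"
      by (simp add: algebra_simps power2_eq_square)
    hence "t * m xk1 \<le> t * (F xk - c * D * (2 - t))" by (simp add: algebra_simps)
    hence "m xk1 \<le> F xk - c * D * (2 - t)" using t by simp
    thus ?thesis using hlow by linarith
  qed
  have D0: "D \<ge> 0" by (simp add: D_def)
  have main: "inner h d \<ge> 2 * c * D"
  proof (rule ccontr)
    assume a: "\<not> ?thesis"
    define b where "b = 2 * c * D"
    have bpos: "b > 0"
    proof -
      have "inner h d \<ge> c * D * (2 - 1)" using key[of 1] by simp
      thus ?thesis using a c0 D0 unfolding b_def
        by (smt (verit, best) mult_nonneg_nonneg)
    qed
    define t where "t = min 1 ((b - inner h d) / b)"
    have t0: "0 < t" using a bpos unfolding t_def b_def by auto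
    have t1: "t \<le> 1" unfolding t_def by simp
    have "inner h d \<ge> c * D * (2 - t)" using key t0 t1 by blast
    moreover have "c * D * (2 - t) = b - t * b / 2" unfolding b_def by (simp add: algebra_simps)
    moreover have "t * b \<le> b - inner h d"
      using bpos unfolding t_def by (simp add: min_def field_simps)
    ultimately show False using a bpos unfolding b_def by linarith
  qed
  have cs: "inner h d \<le> norm h * norm d" by (rule norm_cauchy_schwarz)
  have "norm d \<le> \<alpha> * norm h"
  proof (cases "norm d = 0")
    case True thus ?thesis using assms(11) by simp
  next
    case False
    hence nd: "norm d > 0" by simp
    have "2 * c * D = (norm d)\<^sup>2 / \<alpha>" unfolding c_def D_def using assms(11) by simp
    hence "(norm d)\<^sup>2 / \<alpha> \<le> norm h * norm d" using main cs by linarith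
    hence "(norm d)\<^sup>2 \<le> \<alpha> * (norm h * norm d)" using assms(11) by (simp add: divide_le_eq mult.commute)
    hence "norm d * norm d \<le> (\<alpha> * norm h) * norm d" by (simp add: power2_eq_square algebra_simps)
    thus ?thesis using nd by simp
  qed
  thus ?thesis using hF unfolding F_def d_def by blast
qed

end
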